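(* Let $G$ be a graph, $\theta$ a real number, and let $u_1,\dots,u_k$ be distinct $\theta$-positive vertices of $G$. Then $\mathrm{mult}(\theta,G\setminus\{u_1,\dots,u_k\})$ is either equal to $\mathrm{mult}(\theta,G)+k$ or at most $\mathrm{mult}(\theta,G)+k-2$.
   Context: All graphs are finite and simple. For a graph $G$ on $n$ vertices, let $p(G,r)$ be the number of $r$-matchings of $G$ ($p(G,0)=1$); the matching polynomial is $\mu(G,x)=\sum_{r=0}^{\lfloor n/2\rfloor}(-1)^r p(G,r)x^{n-2r}$. For real $\theta$, $\mathrm{mult}(\theta,G)$ is the multiplicity of $\theta$ as a root of $\mu(G,x)$ (it is $0$ if $\theta$ is not a root). $G\setminus X$ denotes deletion of the vertex set $X$ and $G\setminus u=G\setminus\{u\}$. A vertex $u$ is $\theta$-positive in $G$ if $\mathrm{mult}(\theta,G\setminus u)=\mathrm{mult}(\theta,G)+1$. *)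

theory Defs
  imports "HOL-Computational_Algebra.Polynomial"
begin

type_synonym 'a graph = "'a set \<times> 'a set set"

definition simple_graph :: "'a graph \<Rightarrow> bool" where
  "simple_graph G \<longleftrightarrow> finite (fst G) \<and>
     (\<forall>e\<in>snd G. e \<subseteq> fst G \<and> card e = 2)"

definition verts :: "'a graph \<Rightarrow> 'a set" where "verts G = fst G"
definition edges :: "'a graph \<Rightarrow> 'a set set" where "edges G = snd G"

definition del_verts :: "'a graph \<Rightarrow> 'a set \<Rightarrow> 'a graph" where
  "del_verts G X = (verts G - X, {e \<in> edges G. e \<inter> X = {}})"

definition matchings :: "'a graph \<Rightarrow> nat \<Rightarrow> 'a set set set" where
  "matchings G r = {M. M \<subseteq> edges G \<and> card M = r \<and>
      (\<forall>e\<in>M. \<forall>f\<in>M. e \<noteq> f \<longrightarrow> e \<inter> f = {})}"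

definition num_matchings :: "'a graph \<Rightarrow> nat \<Rightarrow> nat" where
  "num_matchings G r = card (matchings G r)"

definition matching_poly :: "'a graph \<Rightarrow> real poly" where
  "matching_poly G = (\<Sum>r\<le>card (verts G) div 2.
      monom ((-1) ^ r * real (num_matchings G r)) (card (verts G) - 2 * r))"

definition mult :: "real \<Rightarrow> 'a graph \<Rightarrow> nat" where
  "mult \<theta> G = order \<theta> (matching_poly G)"

definition theta_positive :: "real \<Rightarrow> 'a graph \<Rightarrow> 'a \<Rightarrow> bool" where
  "theta_positive \<theta> G u \<longleftrightarrow> mult \<theta> (del_verts G {u}) = mult \<theta> G + 1"

end

theory Submission
  imports Defs
begin



definition Ms :: "'a graph \<Rightarrow> 'a set set set" where
  "Ms G = {M. M \<subseteq> edges G \<and> (\<forall>e\<in>M. \<forall>f\<in>M. e \<noteq> f \<longrightarrow> e \<inter> f = {})}"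

definition mp :: "'a graph \<Rightarrow> real poly" where
  "mp G = (\<Sum>M\<in>Ms G. monom ((-1) ^ card M) (card (verts G) - 2 * card M))"

lemma sg_fin_edges: "simple_graph G \<Longrightarrow> finite (edges G)"
proof -
  assume "simple_graph G"
  hence "edges G \<subseteq> Pow (verts G)" "finite (verts G)" by (auto simp: simple_graph_def verts_def edges_def)
  thus ?thesis by (meson finite_Pow_iff finite_subset)
qed

lemma sg_fin_Ms: "simple_graph G \<Longrightarrow> finite (Ms G)"
proof -
  assume "simple_graph G"
  hence "finite (Pow (edges G))" by (simp add: sg_fin_edges)
  moreover have "Ms G \<subseteq> Pow (edges G)" by (auto simp: Ms_def)
  ultimately show ?thesis by (rule finite_subset[rotated])
qed

lemma sg_card_bound:
  assumes "simple_graph G" "M \<in> Ms G"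
  shows "2 * card M \<le> card (verts G)"
proof -
  have fM: "finite M" using assms sg_fin_edges[OF assms(1)] by (auto simp: Ms_def intro: finite_subset)
  have e2: "\<And>e. e \<in> M \<Longrightarrow> card e = 2 \<and> e \<subseteq> verts G"
    using assms by (auto simp: Ms_def simple_graph_def edges_def verts_def)
  have "pairwise disjnt M" using assms(2) by (auto simp: Ms_def pairwise_def disjnt_def)
  moreover have "\<And>e. e \<in> M \<Longrightarrow> finite e" using e2 by (metis card.infinite zero_neq_numeral)
  ultimately have "card (\<Union>M) = sum card M" by (rule card_Union_disjoint)
  also have "\<dots> = 2 * card M" using e2 by simp
  finally have "card (\<Union>M) = 2 * card M" .
  moreover have "\<Union>M \<subseteq> verts G" using e2 by auto
  moreover have "finite (verts G)" using assms by (simp add: simple_graph_def verts_def)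
  ultimately show ?thesis by (metis card_mono)
qed

lemma matchings_eq: "matchings G r = {M \<in> Ms G. card M = r}"
  by (auto simp: matchings_def Ms_def)

lemma monom_card: "finite A \<Longrightarrow> monom (c * real (card A)) k = (\<Sum>M\<in>A. monom c k)"
  by (induction A rule: finite_induct) (simp_all add: distrib_left add_monom[symmetric] del: sum_constant)

lemma matching_poly_mp:
  assumes "simple_graph G" shows "matching_poly G = mp G"
proof -
  let ?n = "card (verts G)"
  let ?h = "\<lambda>M. monom ((-1::real) ^ card M) (?n - 2 * card M)"
  have "mp G = (\<Sum>r\<le>?n div 2. \<Sum>M\<in>{M. M \<in> Ms G \<and> card M = r}. ?h M)"
    unfolding mp_def
    by (rule sum.group[symmetric]) (auto simp: sg_fin_Ms[OF assms] dest: sg_card_bound[OF assms])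
  also have "\<dots> = (\<Sum>r\<le>?n div 2. monom ((-1) ^ r * real (num_matchings G r)) (?n - 2 * r))"
  proof (rule sum.cong[OF refl])
    fix r
    have f: "finite {M. M \<in> Ms G \<and> card M = r}" using sg_fin_Ms[OF assms] by simp
    show "(\<Sum>M\<in>{M. M \<in> Ms G \<and> card M = r}. ?h M) = monom ((-1) ^ r * real (num_matchings G r)) (?n - 2 * r)"
      unfolding num_matchings_def matchings_eq monom_card[OF f[simplified]]
      by (rule sum.cong) auto
  qed
  finally show ?thesis by (simp add: matching_poly_def)
qed

definition nbrs :: "'a graph \<Rightarrow> 'a \<Rightarrow> 'a set" where
  "nbrs G u = {w. {u,w} \<in> edges G}"

lemma verts_del[simp]: "verts (del_verts G X) = verts G - X"
  by (simp add: del_verts_def verts_def)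
lemma edges_del[simp]: "edges (del_verts G X) = {e \<in> edges G. e \<inter> X = {}}"
  by (simp add: del_verts_def edges_def)
lemma del_del: "del_verts (del_verts G A) B = del_verts G (A \<union> B)"
  by (auto simp: del_verts_def verts_def edges_def)
lemma del_empty[simp]: "del_verts G {} = G"
  by (simp add: del_verts_def verts_def edges_def)

lemma sg_del: "simple_graph G \<Longrightarrow> simple_graph (del_verts G X)"
  unfolding simple_graph_def del_verts_def verts_def edges_def by auto

lemma Ms_del: "Ms (del_verts G X) = {M \<in> Ms G. \<forall>e\<in>M. e \<inter> X = {}}"
  by (auto simp: Ms_def)

lemma nbrs_D:
  assumes "simple_graph G" "w \<in> nbrs G u"
  shows "w \<in> verts G" "u \<in> verts G" "w \<noteq> u"
proof -
  have "{u,w} \<subseteq> verts G" "card {u,w} = 2" using assms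
    by (auto simp: nbrs_def simple_graph_def verts_def edges_def)
  thus "w \<in> verts G" "u \<in> verts G" "w \<noteq> u" by auto
qed

lemma nbrs_fin: "simple_graph G \<Longrightarrow> finite (nbrs G u)"
proof -
  assume G: "simple_graph G"
  have "nbrs G u \<subseteq> verts G" using nbrs_D(1)[OF G] by blast
  moreover have "finite (verts G)" using G by (simp add: simple_graph_def verts_def)
  ultimately show ?thesis by (rule finite_subset)
qed

lemma nbrs_del: "u \<notin> X \<Longrightarrow> nbrs (del_verts G X) u = nbrs G u - X"
  by (auto simp: nbrs_def)

lemma sg_edge: "simple_graph G \<Longrightarrow> e \<in> edges G \<Longrightarrow> u \<in> e \<Longrightarrow> \<exists>w. e = {u,w} \<and> w \<noteq> u"
proof -
  assume a: "simple_graph G" "e \<in> edges G" "u \<in> e"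
  hence "card e = 2" by (auto simp: simple_graph_def edges_def)
  then obtain x y where "e = {x,y}" "x \<noteq> y" by (meson card_2_iff)
  thus ?thesis using a(3) by auto
qed

lemma mp_rec:
  assumes G: "simple_graph G" and u: "u \<in> verts G"
  shows "mp G = [:0,1:] * mp (del_verts G {u}) - (\<Sum>w\<in>nbrs G u. mp (del_verts G {u,w}))"
proof -
  let ?n = "card (verts G)"
  let ?t = "\<lambda>M. monom ((-1::real) ^ card M) (?n - 2 * card M)"
  define A where "A = {M \<in> Ms G. \<forall>e\<in>M. u \<notin> e}"
  define B where "B w = {M \<in> Ms G. {u,w} \<in> M}" for w
  have fin: "finite (Ms G)" by (rule sg_fin_Ms[OF G])
  have fV: "finite (verts G)" using G by (simp add: simple_graph_def verts_def)
  have n1: "card (verts G - {u}) = ?n - 1" using u fV by simp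
  have split: "Ms G = A \<union> (\<Union>w\<in>nbrs G u. B w)"
  proof
    show "A \<union> (\<Union>w\<in>nbrs G u. B w) \<subseteq> Ms G" by (auto simp: A_def B_def)
    show "Ms G \<subseteq> A \<union> (\<Union>w\<in>nbrs G u. B w)"
    proof
      fix M assume M: "M \<in> Ms G"
      show "M \<in> A \<union> (\<Union>w\<in>nbrs G u. B w)"
      proof (cases "\<forall>e\<in>M. u \<notin> e")
        case True thus ?thesis using M by (simp add: A_def)
      next
        case False
        then obtain e where e: "e \<in> M" "u \<in> e" by blast
        hence "e \<in> edges G" using M by (auto simp: Ms_def)
        then obtain w where "e = {u,w}" using sg_edge[OF G] e by blast
        hence "w \<in> nbrs G u" "M \<in> B w" using e M \<open>e \<in> edges G\<close> by (auto simp: nbrs_def B_def)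
        thus ?thesis by blast
      qed
    qed
  qed
  have "mp G = sum ?t A + sum ?t (\<Union>w\<in>nbrs G u. B w)"
    unfolding mp_def split
  proof (rule sum.union_disjoint)
    show "finite A" using fin by (simp add: A_def)
    show "finite (\<Union>w\<in>nbrs G u. B w)" using fin nbrs_fin[OF G] by (simp add: B_def)
    show "A \<inter> (\<Union>w\<in>nbrs G u. B w) = {}" by (auto simp: A_def B_def)
  qed
  also have "sum ?t A = [:0,1:] * mp (del_verts G {u})"
  proof -
    have AM: "A = Ms (del_verts G {u})" by (auto simp: A_def Ms_del)
    have "sum ?t A = (\<Sum>M\<in>A. [:0,1:] * monom ((-1) ^ card M) (card (verts G - {u}) - 2 * card M))"
    proof (rule sum.cong[OF refl])
      fix M assume "M \<in> A"
      hence "2 * card M \<le> card (verts G - {u})"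
        using sg_card_bound[OF sg_del[OF G], of M "{u}"] AM by simp
      moreover have "?n > 0" using u fV card_gt_0_iff by blast
      ultimately have e: "?n - 2 * card M = Suc (card (verts G - {u}) - 2 * card M)" unfolding n1
        by arith
      show "?t M = [:0,1:] * monom ((-1) ^ card M) (card (verts G - {u}) - 2 * card M)"
        unfolding e monom_Suc by simp
    qed
    thus ?thesis by (simp add: mp_def AM sum_distrib_left)
  qed
  also have "sum ?t (\<Union>w\<in>nbrs G u. B w) = (\<Sum>w\<in>nbrs G u. sum ?t (B w))"
  proof (rule sum.UNION_disjoint)
    show "finite (nbrs G u)" by (rule nbrs_fin[OF G])
    show "\<forall>w\<in>nbrs G u. finite (B w)" using fin by (auto simp: B_def)
    show "\<forall>w\<in>nbrs G u. \<forall>w'\<in>nbrs G u. w \<noteq> w' \<longrightarrow> B w \<inter> B w' = {}"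
    proof (intro ballI impI)
      fix w w' assume "w \<in> nbrs G u" "w' \<in> nbrs G u" "w \<noteq> w'"
      show "B w \<inter> B w' = {}"
      proof (rule ccontr)
        assume "B w \<inter> B w' \<noteq> {}"
        then obtain M where M: "M \<in> Ms G" "{u,w} \<in> M" "{u,w'} \<in> M" by (auto simp: B_def)
        have ne: "{u,w} \<noteq> {u,w'}" using \<open>w \<noteq> w'\<close> by (metis doubleton_eq_iff)
        have D: "\<forall>e\<in>M. \<forall>f\<in>M. e \<noteq> f \<longrightarrow> e \<inter> f = {}" using M(1) by (simp add: Ms_def)
        have "{u,w} \<inter> {u,w'} = {}" by (rule mp[OF bspec[OF bspec[OF D M(2)] M(3)] ne])
        thus False by simp
      qed
    qed
  qed
  also have "(\<Sum>w\<in>nbrs G u. sum ?t (B w)) = (\<Sum>w\<in>nbrs G u. - mp (del_verts G {u,w}))"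
  proof (rule sum.cong[OF refl])
    fix w assume w: "w \<in> nbrs G u"
    have wV: "w \<in> verts G" "w \<noteq> u" using nbrs_D[OF G w] by auto
    have n2: "card (verts G - {u,w}) = ?n - 2" using wV u fV
      by (simp add: card_Diff_subset)
    let ?e = "{u,w}"
    have eE: "?e \<in> edges G" using w by (simp add: nbrs_def)
    show "sum ?t (B w) = - mp (del_verts G {u,w})"
      unfolding mp_def sum_negf[symmetric]
    proof (rule sum.reindex_bij_witness[of _ "\<lambda>M. insert ?e M" "\<lambda>M. M - {?e}"])
      fix M assume M: "M \<in> Ms (del_verts G {u,w})"
      hence M': "M \<in> Ms G" "\<forall>f\<in>M. f \<inter> {u,w} = {}" by (auto simp: Ms_del)
      have eM: "?e \<notin> M" using M'(2) by auto
      show "insert ?e M - {?e} = M" using eM by simp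
      have D: "\<forall>f\<in>M. \<forall>g\<in>M. f \<noteq> g \<longrightarrow> f \<inter> g = {}" "M \<subseteq> edges G" using M'(1) by (auto simp: Ms_def)
      have "\<forall>f\<in>insert ?e M. \<forall>g\<in>insert ?e M. f \<noteq> g \<longrightarrow> f \<inter> g = {}"
        using D(1) M'(2) by (simp add: Int_commute)
      hence "insert ?e M \<in> Ms G" using D(2) eE unfolding Ms_def by simp
      thus "insert ?e M \<in> B w" by (simp add: B_def)
    next
      fix M assume M: "M \<in> B w"
      hence M': "M \<in> Ms G" "?e \<in> M" by (auto simp: B_def)
      show "insert ?e (M - {?e}) = M" using M' by auto
      have D: "\<forall>f\<in>M. \<forall>g\<in>M. f \<noteq> g \<longrightarrow> f \<inter> g = {}" "M \<subseteq> edges G" using M'(1) by (auto simp: Ms_def)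
      have "\<forall>f\<in>M - {?e}. f \<inter> {u,w} = {}"
      proof
        fix f assume "f \<in> M - {?e}"
        thus "f \<inter> {u,w} = {}" using mp[OF bspec[OF bspec[OF D(1)] M'(2)]] by blast
      qed
      moreover have "M - {?e} \<in> Ms G" using D unfolding Ms_def by blast
      ultimately show "M - {?e} \<in> Ms (del_verts G {u,w})" by (simp add: Ms_del)
      have fM: "finite M" using D(2) sg_fin_edges[OF G] by (rule finite_subset)
      have cM: "card M = Suc (card (M - {?e}))" using fM M'(2) by (metis card_Suc_Diff1)
      show "- monom ((-1) ^ card (M - {?e})) (card (verts (del_verts G {u, w})) - 2 * card (M - {?e})) = ?t M"
        unfolding cM using n2 by (simp add: minus_monom)
    qed
  qed
  finally show ?thesis by (simp add: sum_negf)
qed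




lemma mp_nonzero:
  assumes G: "simple_graph G" shows "mp G \<noteq> 0"
proof -
  let ?n = "card (verts G)"
  have "coeff (mp G) ?n = (\<Sum>M\<in>Ms G. (if M = {} then 1 else 0))"
    unfolding mp_def coeff_sum
  proof (rule sum.cong[OF refl])
    fix M assume M: "M \<in> Ms G"
    have fM: "finite M" using M sg_fin_edges[OF G] by (auto simp: Ms_def intro: finite_subset)
    have b: "2 * card M \<le> ?n" by (rule sg_card_bound[OF G M])
    show "coeff (monom ((-1::real) ^ card M) (?n - 2 * card M)) ?n = (if M = {} then 1 else 0)"
    proof (cases "M = {}")
      case False
      hence "card M \<ge> 1" using fM by (simp add: Suc_leI card_gt_0_iff)
      hence "?n - 2 * card M \<noteq> ?n" using b by arith
      thus ?thesis using False by (simp add: coeff_monom)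
    qed (simp add: coeff_monom)
  qed
  also have "\<dots> = 1"
  proof -
    have "{} \<in> Ms G" by (simp add: Ms_def)
    thus ?thesis using sg_fin_Ms[OF G] by (simp add: sum.delta)
  qed
  finally show ?thesis by auto
qed

inductive sos :: "real poly \<Rightarrow> bool" where
  sos0: "sos 0"
| sosS: "sos p \<Longrightarrow> sos (p + q ^ 2)"

lemma sos_sq: "sos (q ^ 2)"
  using sosS[OF sos0, of q] by simp

lemma sos_add: "sos q \<Longrightarrow> sos p \<Longrightarrow> sos (p + q)"
proof (induction q rule: sos.induct)
  case sos0 thus ?case by simp
next
  case (sosS q r)
  have "sos ((p + q) + r ^ 2)" using sosS by (intro sos.sosS) simp
  thus ?case by (simp add: add.assoc)
qed

lemma sos_sum: "finite A \<Longrightarrow> (\<And>x. x \<in> A \<Longrightarrow> sos (f x)) \<Longrightarrow> sos (sum f A)"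
  by (induction A rule: finite_induct) (auto intro: sos0 sos_add)

lemma combine:
  fixes r s :: "real poly"
  assumes "poly r t > 0" "poly s t > 0"
  shows "\<exists>l w. [:-t,1:]^(2*k) * r + [:-t,1:]^(2*j) * s = [:-t,1:]^(2*l) * w \<and> poly w t > 0 \<and> l \<le> k \<and> l \<le> j"
proof (cases "k \<le> j")
  case True
  define w where "w = r + [:-t,1:]^(2*(j-k)) * s"
  have "[:-t,1:]^(2*j) = [:-t,1:]^(2*k) * [:-t,1:]^(2*(j-k))"
  proof -
    have "2*j = 2*k + 2*(j-k)" using True by simp
    thus ?thesis by (metis power_add)
  qed
  hence e: "[:-t,1:]^(2*k) * r + [:-t,1:]^(2*j) * s = [:-t,1:]^(2*k) * w"
    by (simp add: w_def algebra_simps)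
  have "poly ([:-t,1:]^(2*(j-k)) * s) t \<ge> 0" using assms(2)
    by (simp add: poly_power)
  hence "poly w t > 0" using assms(1) by (simp add: w_def)
  thus ?thesis using e True by blast
next
  case False
  define w where "w = s + [:-t,1:]^(2*(k-j)) * r"
  have "[:-t,1:]^(2*k) = [:-t,1:]^(2*j) * [:-t,1:]^(2*(k-j))"
  proof -
    have "2*k = 2*j + 2*(k-j)" using False by simp
    thus ?thesis by (metis power_add)
  qed
  hence e: "[:-t,1:]^(2*k) * r + [:-t,1:]^(2*j) * s = [:-t,1:]^(2*j) * w"
    by (simp add: w_def algebra_simps)
  have "poly ([:-t,1:]^(2*(k-j)) * r) t \<ge> 0" using assms(1)
    by (simp add: poly_power)
  hence "poly w t > 0" using assms(2) by (simp add: w_def)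
  thus ?thesis using e False by (intro exI[of _ j] exI[of _ w]) auto
qed

lemma sq_form:
  fixes q :: "real poly"
  assumes "q \<noteq> 0"
  shows "\<exists>w. q ^ 2 = [:-t,1:]^(2 * order t q) * w \<and> poly w t > 0"
proof -
  obtain q1 where q1: "q = [:-t,1:]^order t q * q1" "\<not> [:-t,1:] dvd q1"
    using order_decomp[OF assms] by blast
  have "poly q1 t \<noteq> 0" using q1(2) by (simp add: poly_eq_0_iff_dvd)
  hence "poly (q1^2) t > 0" by simp
  moreover have "q ^ 2 = [:-t,1:]^(2 * order t q) * q1^2"
    by (subst q1(1)) (simp add: power_mult_distrib power_mult[symmetric] mult.commute)
  ultimately show ?thesis by blast
qed

lemma sos_form_sq:
  fixes s q :: "real poly"
  assumes "sos s" "q \<noteq> 0"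
  shows "\<exists>k w. s + q^2 = [:-t,1:]^(2*k) * w \<and> poly w t > 0 \<and> k \<le> order t q"
  using assms
proof (induction s rule: sos.induct)
  case sos0
  thus ?case using sq_form[OF assms(2), of t] by auto
next
  case (sosS p r)
  show ?case
  proof (cases "r = 0")
    case True thus ?thesis using sosS by (simp add: power2_eq_square)
  next
    case False
    obtain k w where kw: "p + q^2 = [:-t,1:]^(2*k) * w" "poly w t > 0" "k \<le> order t q"
      using sosS by blast
    obtain w' where w': "r ^ 2 = [:-t,1:]^(2 * order t r) * w'" "poly w' t > 0"
      using sq_form[OF False] by blast
    obtain l v where lv: "[:-t,1:]^(2*k) * w + [:-t,1:]^(2*order t r) * w' = [:-t,1:]^(2*l) * v"
        "poly v t > 0" "l \<le> k" "l \<le> order t r"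
      using combine[OF kw(2) w'(2)] by blast
    have "p + r^2 + q^2 = [:-t,1:]^(2*l) * v"
      using kw(1) w'(1) lv(1) by (simp add: algebra_simps)
    thus ?thesis using lv kw by (intro exI[of _ l] exI[of _ v]) auto
  qed
qed

lemma sos_form:
  fixes s :: "real poly"
  assumes "sos s"
  shows "s = 0 \<or> (\<exists>k w. s = [:-t,1:]^(2*k) * w \<and> poly w t > 0)"
  using assms
proof (induction s rule: sos.induct)
  case (sosS p q)
  show ?case
  proof (cases "q = 0")
    case True thus ?thesis using sosS by (simp add: power2_eq_square)
  next
    case False thus ?thesis using sos_form_sq[OF sosS(1) False, of t] by blast
  qed
qed simp

lemma order_form:
  fixes w :: "real poly"
  assumes "poly w t \<noteq> 0"
  shows "order t ([:-t,1:]^m * w) = m"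
proof -
  have "w \<noteq> 0" using assms by auto
  hence "[:-t,1:]^m * w \<noteq> 0" by simp
  hence "order t ([:-t,1:]^m * w) = order t ([:-t,1:]^m) + order t w" by (rule order_mult)
  thus ?thesis using order_power_n_n order_0I[OF assms] by simp
qed




lemma pderiv_sum: "pderiv (sum f A) = (\<Sum>x\<in>A. pderiv (f x))"
  by (induction A rule: infinite_finite_induct) (auto simp: pderiv_add)

lemma dvd_pderiv:
  fixes p :: "real poly"
  assumes "[:-t,1:]^m dvd p" shows "[:-t,1:]^(m-1) dvd pderiv p"
proof -
  obtain q where q: "p = [:-t,1:]^m * q" using assms by blast
  have d1: "[:-t,1:]^(m-1) dvd [:-t,1:]^m" by (simp add: le_imp_power_dvd)
  have "pderiv ([:-t,1:]^m) = smult (of_nat m) ([:-t,1:]^(m-1) * pderiv [:-t,1:])"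
    by (rule pderiv_power)
  hence d2: "[:-t,1:]^(m-1) dvd pderiv ([:-t,1:]^m)" by (simp add: dvd_smult)
  have "pderiv p = [:-t,1:]^m * pderiv q + q * pderiv ([:-t,1:]^m)" unfolding q by (rule pderiv_mult)
  thus ?thesis using d1 d2 by (simp add: dvd_mult2 dvd_mult)
qed

definition hh :: "'a graph \<Rightarrow> 'a \<Rightarrow> real poly" where
  "hh G u = mp (del_verts G {u}) * pderiv (mp G) - mp G * pderiv (mp (del_verts G {u}))"

lemma del2: "del_verts (del_verts G {u}) {w} = del_verts G {u,w}"
  by (simp add: del_del insert_commute)

lemma alg_h:
  fixes M A S M' A' S' x :: "real poly"
  assumes "M = x * A - S" "M' = A + x * A' - S'"
  shows "A * M' - M * A' = A^2 + (S * A' - A * S')"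
  unfolding assms by (simp add: algebra_simps power2_eq_square)

lemma hh_rec:
  assumes G: "simple_graph G" and u: "u \<in> verts G"
  shows "hh G u = mp (del_verts G {u})^2 + (\<Sum>w\<in>nbrs G u. hh (del_verts G {u}) w)"
proof -
  let ?A = "mp (del_verts G {u})"
  let ?C = "\<lambda>w. mp (del_verts G {u,w})"
  have r: "mp G = [:0,1:] * ?A - sum ?C (nbrs G u)" by (rule mp_rec[OF G u])
  have r': "pderiv (mp G) = ?A + [:0,1:] * pderiv ?A - (\<Sum>w\<in>nbrs G u. pderiv (?C w))"
    unfolding r by (simp add: pderiv_diff pderiv_mult pderiv_sum pderiv_pCons)
  have "hh G u = ?A^2 + ((\<Sum>w\<in>nbrs G u. ?C w) * pderiv ?A - ?A * (\<Sum>w\<in>nbrs G u. pderiv (?C w)))"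
    unfolding hh_def by (rule alg_h[OF r r'])
  also have "\<dots> = ?A^2 + (\<Sum>w\<in>nbrs G u. hh (del_verts G {u}) w)"
    by (simp add: hh_def del2 sum_distrib_left sum_distrib_right sum_subtractf)
  finally show ?thesis .
qed

lemma sos_hh: "simple_graph G \<Longrightarrow> u \<in> verts G \<Longrightarrow> sos (hh G u)"
proof (induction "card (verts G)" arbitrary: G u rule: less_induct)
  case less
  have fV: "finite (verts G)" using less.prems by (simp add: simple_graph_def verts_def)
  have "sos (\<Sum>w\<in>nbrs G u. hh (del_verts G {u}) w)"
  proof (rule sos_sum[OF nbrs_fin[OF less.prems(1)]])
    fix w assume w: "w \<in> nbrs G u"
    have "card (verts (del_verts G {u})) < card (verts G)"
      unfolding verts_del by (rule card_Diff1_less[OF fV less.prems(2)])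
    moreover have "w \<in> verts (del_verts G {u})" using nbrs_D[OF less.prems(1) w] by simp
    ultimately show "sos (hh (del_verts G {u}) w)"
      using less.hyps[OF _ sg_del[OF less.prems(1)]] by blast
  qed
  hence "sos ((\<Sum>w\<in>nbrs G u. hh (del_verts G {u}) w) + mp (del_verts G {u})^2)"
    by (rule sosS)
  thus ?case by (simp add: hh_rec[OF less.prems] add.commute)
qed

lemma ord_lower:
  assumes G: "simple_graph G" and u: "u \<in> verts G"
  shows "order t (mp G) \<le> order t (mp (del_verts G {u})) + 1"
proof -
  let ?A = "mp (del_verts G {u})"
  let ?X = "[:-t,1:]"
  define n where "n = order t ?A"
  define m where "m = order t (mp G)"
  have A0: "?A \<noteq> 0" by (rule mp_nonzero[OF sg_del[OF G]])
  have s: "sos (\<Sum>w\<in>nbrs G u. hh (del_verts G {u}) w)"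
  proof (rule sos_sum[OF nbrs_fin[OF G]])
    fix w assume w: "w \<in> nbrs G u"
    have "w \<in> verts (del_verts G {u})" using nbrs_D[OF G w] by simp
    thus "sos (hh (del_verts G {u}) w)" by (rule sos_hh[OF sg_del[OF G]])
  qed
  have e: "hh G u = (\<Sum>w\<in>nbrs G u. hh (del_verts G {u}) w) + ?A^2"
    using hh_rec[OF G u] by (simp add: add.commute)
  obtain k w where kw: "hh G u = ?X^(2*k) * w" "poly w t > 0" "k \<le> n"
    using sos_form_sq[OF s A0, of t] unfolding e n_def by blast
  have ohh: "order t (hh G u) = 2 * k" using kw order_form by simp
  have hh0: "hh G u \<noteq> 0" using kw by auto
  have dA: "?X^n dvd ?A" unfolding n_def by (rule order_1)
  have dM: "?X^m dvd mp G" unfolding m_def by (rule order_1)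
  have "?X^n * ?X^(m-1) dvd ?A * pderiv (mp G)" by (rule mult_dvd_mono[OF dA dvd_pderiv[OF dM]])
  hence "?X^(n + (m-1)) dvd ?A * pderiv (mp G)" by (simp only: power_add)
  hence d1: "?X^(m+n-1) dvd ?A * pderiv (mp G)" by (rule dvd_trans[rotated]) (simp add: le_imp_power_dvd)
  have "?X^m * ?X^(n-1) dvd mp G * pderiv ?A" by (rule mult_dvd_mono[OF dM dvd_pderiv[OF dA]])
  hence "?X^(m + (n-1)) dvd mp G * pderiv ?A" by (simp only: power_add)
  hence d2: "?X^(m+n-1) dvd mp G * pderiv ?A" by (rule dvd_trans[rotated]) (simp add: le_imp_power_dvd)
  have "?X^(m+n-1) dvd hh G u" unfolding hh_def using d1 d2 by (rule dvd_diff)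
  hence "m + n - 1 \<le> 2 * k" using hh0 ohh by (simp add: order_divides)
  thus ?thesis using kw(3) m_def n_def by linarith
qed

lemma ord_upper:
  assumes G: "simple_graph G" and u: "u \<in> verts G"
  shows "order t (mp (del_verts G {u})) \<le> order t (mp G) + 1"
proof -
  let ?A = "mp (del_verts G {u})"
  let ?X = "[:-t,1:]"
  define n where "n = order t ?A"
  have dA: "?X^(n-1) dvd ?A" unfolding n_def by (rule dvd_trans[OF _ order_1[of t]]) (simp add: le_imp_power_dvd)
  have "?X^(n-1) dvd sum (\<lambda>w. mp (del_verts G {u,w})) (nbrs G u)"
  proof (rule dvd_sum)
    fix w assume w: "w \<in> nbrs G u"
    have wv: "w \<in> verts (del_verts G {u})" using nbrs_D[OF G w] by simp
    have "n \<le> order t (mp (del_verts (del_verts G {u}) {w})) + 1"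
      unfolding n_def by (rule ord_lower[OF sg_del[OF G] wv])
    hence "n - 1 \<le> order t (mp (del_verts G {u,w}))" by (simp add: del2)
    thus "?X^(n-1) dvd mp (del_verts G {u,w})" by (simp add: order_divides)
  qed
  hence "?X^(n-1) dvd [:0,1:] * ?A - sum (\<lambda>w. mp (del_verts G {u,w})) (nbrs G u)"
    by (rule dvd_diff[OF dvd_mult[OF dA]])
  hence "?X^(n-1) dvd mp G" unfolding mp_rec[OF G u] .
  hence "n - 1 \<le> order t (mp G)" using mp_nonzero[OF G] by (simp add: order_divides)
  thus ?thesis using n_def by linarith
qed




definition ff :: "'a graph \<Rightarrow> 'a \<Rightarrow> 'a \<Rightarrow> real poly" where
  "ff G u v = mp (del_verts G {u}) * mp (del_verts G {v}) - mp G * mp (del_verts G {u,v})"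

lemma alg_f:
  fixes M Mv A B S T x :: "real poly"
  assumes "M = x * A - S" "Mv = x * B - T"
  shows "A * Mv - M * B = S * B - A * T"
  unfolding assms by (simp add: algebra_simps)

lemma ff_rec:
  assumes G: "simple_graph G" and u: "u \<in> verts G" and v: "v \<in> verts G" and uv: "u \<noteq> v"
  shows "ff G u v = (if v \<in> nbrs G u then mp (del_verts G {u,v})^2 else 0)
           + (\<Sum>w\<in>nbrs G u - {v}. ff (del_verts G {u}) w v)"
proof -
  let ?A = "mp (del_verts G {u})"
  let ?B = "mp (del_verts G {u,v})"
  let ?C = "\<lambda>w. mp (del_verts G {u,w})"
  let ?D = "\<lambda>w. mp (del_verts G {u,v,w})"
  let ?N = "nbrs G u"
  have r1: "mp G = [:0,1:] * ?A - sum ?C ?N" by (rule mp_rec[OF G u])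
  have uGv: "u \<in> verts (del_verts G {v})" using u uv by simp
  have r2': "mp (del_verts G {v}) = [:0,1:] * mp (del_verts (del_verts G {v}) {u})
     - (\<Sum>w\<in>nbrs (del_verts G {v}) u. mp (del_verts (del_verts G {v}) {u,w}))"
    by (rule mp_rec[OF sg_del[OF G] uGv])
  have e1: "del_verts (del_verts G {v}) {u} = del_verts G {u,v}" by (simp add: del_del insert_commute)
  have e2: "\<And>w. del_verts (del_verts G {v}) {u,w} = del_verts G {u,v,w}" by (simp add: del_del insert_commute)
  have e3: "nbrs (del_verts G {v}) u = ?N - {v}" using uv by (simp add: nbrs_del)
  have r2: "mp (del_verts G {v}) = [:0,1:] * ?B - sum ?D (?N - {v})"
    using r2' unfolding e1 e2 e3 .
  have "ff G u v = sum ?C ?N * ?B - ?A * sum ?D (?N - {v})"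
    unfolding ff_def by (rule alg_f[OF r1 r2])
  also have "sum ?C ?N = (if v \<in> ?N then ?B else 0) + sum ?C (?N - {v})"
    using nbrs_fin[OF G] by (simp add: sum_diff1)
  also have "(\<dots>) * ?B - ?A * sum ?D (?N - {v}) = (if v \<in> ?N then ?B^2 else 0)
      + (\<Sum>w\<in>?N - {v}. ?C w * ?B - ?A * ?D w)"
    by (simp add: algebra_simps power2_eq_square sum_distrib_left sum_distrib_right sum_subtractf)
  also have "(\<Sum>w\<in>?N - {v}. ?C w * ?B - ?A * ?D w) = (\<Sum>w\<in>?N - {v}. ff (del_verts G {u}) w v)"
  proof (rule sum.cong[OF refl])
    fix w assume w: "w \<in> ?N - {v}"
    have a: "del_verts (del_verts G {u}) {w} = del_verts G {u,w}" by (simp add: del2)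
    have b: "del_verts (del_verts G {u}) {v} = del_verts G {u,v}" by (simp add: del2)
    have c: "del_verts (del_verts G {u}) {w,v} = del_verts G {u,v,w}" by (simp add: del_del insert_commute)
    show "?C w * ?B - ?A * ?D w = ff (del_verts G {u}) w v" unfolding ff_def a b c ..
  qed
  finally show ?thesis .
qed

lemma sos_ff: "simple_graph G \<Longrightarrow> u \<in> verts G \<Longrightarrow> v \<in> verts G \<Longrightarrow> u \<noteq> v \<Longrightarrow> sos (ff G u v)"
proof (induction "card (verts G)" arbitrary: G u v rule: less_induct)
  case less
  have G: "simple_graph G" by (rule less.prems(1))
  have fV: "finite (verts G)" using G by (simp add: simple_graph_def verts_def)
  have lt: "card (verts (del_verts G {u})) < card (verts G)"
    unfolding verts_del by (rule card_Diff1_less[OF fV less.prems(2)])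
  have "sos (\<Sum>w\<in>nbrs G u - {v}. ff (del_verts G {u}) w v)"
  proof (rule sos_sum)
    show "finite (nbrs G u - {v})" using nbrs_fin[OF G] by simp
    fix w assume w: "w \<in> nbrs G u - {v}"
    have wv: "w \<in> verts (del_verts G {u})" using nbrs_D[OF G] w by auto
    have vv: "v \<in> verts (del_verts G {u})" using less.prems by auto
    have "w \<noteq> v" using w by simp
    thus "sos (ff (del_verts G {u}) w v)"
      using less.hyps[OF lt sg_del[OF G] wv vv] by blast
  qed
  moreover have "sos (if v \<in> nbrs G u then mp (del_verts G {u,v})^2 else 0)"
    by (simp add: sos_sq sos0)
  ultimately show ?case unfolding ff_rec[OF less.prems] by (rule sos_add)
qed




lemma mult_mp: "simple_graph G \<Longrightarrow> mult t G = order t (mp G)"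
  by (simp add: mult_def matching_poly_mp)

lemma pair_contra:
  assumes H: "simple_graph H" and a: "a \<in> verts H" and b: "b \<in> verts H" and ab: "a \<noteq> b"
    and o0: "order t (mp H) = n"
    and oa: "order t (mp (del_verts H {a})) = Suc n"
    and ob: "order t (mp (del_verts H {b})) = Suc n"
    and oab: "order t (mp (del_verts H {a,b})) = Suc n"
  shows False
proof -
  let ?X = "[:-t,1:]"
  let ?P1 = "mp (del_verts H {a}) * mp (del_verts H {b})"
  let ?P2 = "mp H * mp (del_verts H {a,b})"
  have nz: "mp H \<noteq> 0" "mp (del_verts H {a,b}) \<noteq> 0"
    using mp_nonzero[OF H] mp_nonzero[OF sg_del[OF H]] by auto
  have o2: "order t ?P2 = 2*n+1" using nz o0 oab by (simp add: order_mult)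
  have "?X^Suc n dvd mp (del_verts H {a})" by (subst order_divides) (simp add: oa)
  moreover have "?X^Suc n dvd mp (del_verts H {b})" by (subst order_divides) (simp add: ob)
  ultimately have "?X^Suc n * ?X^Suc n dvd ?P1"
    by (rule mult_dvd_mono)
  moreover have "2*n+2 = Suc n + Suc n" by simp
  hence "?X^(2*n+2) = ?X^Suc n * ?X^Suc n" by (simp only: power_add)
  ultimately have d1: "?X^(2*n+2) dvd ?P1" by simp
  have d2: "?X^(2*n+1) dvd ?P2" by (subst order_divides) (simp add: o2)
  have d1': "?X^(2*n+1) dvd ?P1" using d1 by (rule dvd_trans[rotated]) (rule le_imp_power_dvd, simp)
  have f: "ff H a b = ?P1 - ?P2" by (simp add: ff_def)
  have df: "?X^(2*n+1) dvd ff H a b" unfolding f using d1' d2 by (rule dvd_diff)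
  have ndf: "\<not> ?X^(2*n+2) dvd ff H a b"
  proof
    assume "?X^(2*n+2) dvd ff H a b"
    hence "?X^(2*n+2) dvd ?P1 - ff H a b" using d1 by (rule dvd_diff[rotated])
    hence "?X^(2*n+2) dvd ?P2" by (simp add: f)
    hence "?P2 = 0 \<or> 2*n+2 \<le> order t ?P2" by (simp only: order_divides)
    thus False using o2 nz by simp
  qed
  have f0: "ff H a b \<noteq> 0" using ndf by auto
  have "2*n+1 \<le> order t (ff H a b)" using df f0 by (simp only: order_divides) simp
  moreover have "\<not> 2*n+2 \<le> order t (ff H a b)" using ndf f0 by (simp only: order_divides) simp
  ultimately have of: "order t (ff H a b) = 2*n+1" by simp
  have "sos (ff H a b)" by (rule sos_ff[OF H a b ab])
  then obtain j w where jw: "ff H a b = ?X^(2*j) * w" "poly w t > 0"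
    using sos_form[of "ff H a b" t] f0 by blast
  have "order t (ff H a b) = 2*j" unfolding jw(1) by (rule order_form) (use jw in simp)
  thus False using of by presburger
qed

lemma main:
  assumes G: "simple_graph G"
  shows "finite U \<Longrightarrow> U \<subseteq> verts G \<Longrightarrow> \<forall>u\<in>U. order t (mp (del_verts G {u})) = order t (mp G) + 1 \<Longrightarrow>
    order t (mp (del_verts G U)) = order t (mp G) + card U \<or>
    order t (mp (del_verts G U)) + 2 \<le> order t (mp G) + card U"
proof (induction "card U" arbitrary: U rule: less_induct)
  case less
  define Ov where "Ov X = order t (mp (del_verts G X))" for X
  define m where "m = order t (mp G)"
  define k where "k = card U"
  have IH: "\<And>V. V \<subseteq> U \<Longrightarrow> card V < k \<Longrightarrow> Ov V = m + card V \<or> Ov V + 2 \<le> m + card V"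
  proof -
    fix V assume V: "V \<subseteq> U" "card V < k"
    have fV: "finite V" using V(1) less.prems(1) by (rule finite_subset)
    have c: "card V < card U" using V(2) k_def by simp
    have sV: "V \<subseteq> verts G" using V(1) less.prems(2) by (rule subset_trans)
    have pV: "\<forall>u\<in>V. order t (mp (del_verts G {u})) = order t (mp G) + 1" using V(1) less.prems(3) by blast
    show "Ov V = m + card V \<or> Ov V + 2 \<le> m + card V"
      using less.hyps[OF c fV sV pV] unfolding Ov_def m_def .
  qed
  have upper: "\<And>V x. V \<subseteq> U \<Longrightarrow> x \<in> U \<Longrightarrow> x \<notin> V \<Longrightarrow> Ov (insert x V) \<le> Ov V + 1 \<and> Ov V \<le> Ov (insert x V) + 1"
  proof -
    fix V x assume V: "V \<subseteq> U" "x \<in> U" "x \<notin> V"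
    have xv: "x \<in> verts (del_verts G V)" using V less.prems(2) by auto
    have e: "del_verts (del_verts G V) {x} = del_verts G (insert x V)" by (simp add: del_del)
    show "Ov (insert x V) \<le> Ov V + 1 \<and> Ov V \<le> Ov (insert x V) + 1"
      using ord_upper[OF sg_del[OF G] xv, of t] ord_lower[OF sg_del[OF G] xv, of t]
      unfolding e Ov_def by simp
  qed
  show ?case
  proof (cases "k \<le> 1")
    case True
    show ?thesis
    proof (cases "k = 0")
      case True
      hence "U = {}" using less.prems(1) k_def by simp
      thus ?thesis by simp
    next
      case False
      hence "k = 1" using \<open>k \<le> 1\<close> by simp
      then obtain u where "U = {u}" using k_def by (metis card_1_singletonE)
      thus ?thesis using less.prems(3) by simp
    qed
  next
    case False
    have "\<not> card U \<le> Suc 0" using False k_def by simp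
    then obtain a b where ab: "a \<in> U" "b \<in> U" "a \<noteq> b"
      using card_le_Suc0_iff_eq[OF less.prems(1)] by blast
    have fU: "finite U" by (rule less.prems(1))
    have cUb: "card (U - {b}) = k - 1" using ab fU k_def by simp
    have cUa: "card (U - {a}) = k - 1" using ab fU k_def by simp
    define W where "W = U - {a,b}"
    have cW: "card W = k - 2" using ab fU k_def unfolding W_def by (simp add: card_Diff_subset)
    have Ub: "insert b (U - {b}) = U" using ab by auto
    have Ua: "insert a (U - {a}) = U" using ab by auto
    have Wa: "insert a W = U - {b}" using ab unfolding W_def by auto
    have Wb: "insert b W = U - {a}" using ab unfolding W_def by auto
    have k2: "k \<ge> 2" using False by simp
    show ?thesis
    proof (rule ccontr)
      assume nc: "\<not> ?thesis"
      hence nc': "Ov U \<noteq> m + k" "Ov U + 2 > m + k" unfolding Ov_def m_def k_def by auto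
      have s1: "U - {b} \<subseteq> U" "b \<notin> U - {b}" "U - {a} \<subseteq> U" "a \<notin> U - {a}" by auto
      have u1: "Ov U \<le> Ov (U - {b}) + 1" "Ov (U - {b}) \<le> Ov U + 1"
        using upper[OF s1(1) ab(2) s1(2)] unfolding Ub by auto
      have u2: "Ov U \<le> Ov (U - {a}) + 1" "Ov (U - {a}) \<le> Ov U + 1"
        using upper[OF s1(3) ab(1) s1(4)] unfolding Ua by auto
      have i1: "Ov (U - {b}) = m + (k-1) \<or> Ov (U - {b}) + 2 \<le> m + (k-1)"
        using IH[OF s1(1)] cUb k2 by auto
      have i2: "Ov (U - {a}) = m + (k-1) \<or> Ov (U - {a}) + 2 \<le> m + (k-1)"
        using IH[OF s1(3)] cUa k2 by auto
      have OU: "Ov U = m + k - 1" using nc' u1 i1 k2 by linarith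
      have Ob: "Ov (U - {b}) = m + k - 1" using OU u1 i1 k2 by linarith
      have Oa: "Ov (U - {a}) = m + k - 1" using OU u2 i2 k2 by linarith
      have s2: "W \<subseteq> U" "a \<notin> W" unfolding W_def by auto
      have u3: "Ov (U - {b}) \<le> Ov W + 1"
        using upper[OF s2(1) ab(1) s2(2)] unfolding Wa by auto
      have i3: "Ov W = m + (k-2) \<or> Ov W + 2 \<le> m + (k-2)"
        using IH[OF s2(1)] cW k2 by auto
      have OW: "Ov W = m + k - 2" using Ob u3 i3 k2 by linarith
      have aW: "a \<in> verts (del_verts G W)" "b \<in> verts (del_verts G W)"
        using ab less.prems(2) unfolding W_def by auto
      have ea: "del_verts (del_verts G W) {a} = del_verts G (U - {b})" by (simp add: del_del Wa[symmetric])
      have eb: "del_verts (del_verts G W) {b} = del_verts G (U - {a})" by (simp add: del_del Wb[symmetric])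
      have "W \<union> {a,b} = U" using ab unfolding W_def by auto
      hence eab: "del_verts (del_verts G W) {a,b} = del_verts G U"
        unfolding del_del by simp
      show False
      proof (rule pair_contra[OF sg_del[OF G] aW ab(3)])
        show "order t (mp (del_verts G W)) = m + k - 2" using OW Ov_def by simp
        show "order t (mp (del_verts (del_verts G W) {a})) = Suc (m + k - 2)"
          unfolding ea using Ob Ov_def k2 by simp
        show "order t (mp (del_verts (del_verts G W) {b})) = Suc (m + k - 2)"
          unfolding eb using Oa Ov_def k2 by simp
        show "order t (mp (del_verts (del_verts G W) {a,b})) = Suc (m + k - 2)"
          unfolding eab using OU Ov_def k2 by simp
      qed
    qed
  qed
qed

theorem lemma3p12:
  fixes G :: "'a graph" and \<theta> :: real and U :: "'a set"
  assumes "simple_graph G"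
    and "U \<subseteq> verts G"
    and "\<forall>u\<in>U. theta_positive \<theta> G u"
  shows "mult \<theta> (del_verts G U) = mult \<theta> G + card U \<or>
         mult \<theta> (del_verts G U) + 2 \<le> mult \<theta> G + card U"
proof -
  have "finite (verts G)" using assms(1) by (simp add: simple_graph_def verts_def)
  hence fU: "finite U" using assms(2) finite_subset by blast
  have "\<forall>u\<in>U. order \<theta> (mp (del_verts G {u})) = order \<theta> (mp G) + 1"
    using assms(3) unfolding theta_positive_def
    by (simp add: mult_mp[OF assms(1)] mult_mp[OF sg_del[OF assms(1)]])
  from main[OF assms(1) fU assms(2) this]
  show ?thesis by (simp add: mult_mp[OF assms(1)] mult_mp[OF sg_del[OF assms(1)]])
qed


end
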